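(* Let $\varepsilon_n\downarrow0$. For each $n$ let $\mu_n$ be a QSD for $p^{\varepsilon_n}$ with eigenvalue $\lambda_n$. Suppose $\mu_n\to\mu$ weakly as Borel probability measures on $M$, and suppose $\lim_{n\to\infty}\lambda_n=1$. Then $\mu$ is $F$-invariant, and $\mu$ is supported by the closure of $\mathcal{R}_{ap}$.
   Context: Setting. Let $M\subset\mathbb{R}^d$ be closed; all topological notions are relative to $M$. Let $F:M\to M$ be continuous with $\|F\|:=\sup_{x\in M}\|F(x)\|<\infty$. For $A\subset M$ and $\delta>0$, put $N^\delta(A)=\{x\in M:\inf_{y\in A}\|x-y\|<\delta\}$, and let $d(x,y)=\max_i|x_i-y_i|$. Let $\{X^\varepsilon\}_{\varepsilon>0}$ be a family of time-homogeneous Markov chains on $M$ with transition kernels $p^\varepsilon(x,\Gamma)$. The following standing hypotheses are assumed. (SH1) For every $\delta>0$, $\beta_\delta(\varepsilon):=\sup_{x\in M}p^\varepsilon(x,M\setminus N^\delta(F(x)))\to0$ as $\varepsilon\to0$. (SH2) $M=M_0\cup M_1$ (disjoint), where $M_0$ is closed, $F(M_0)\subseteq M_0$, $F(M_1)\subseteq M_1$, and $p^\varepsilon(x,M_1)=0$ for all $\varepsilon>0$ and $x\in M_0$. QSD. A Borel probability measure $\mu_\varepsilon$ on $M_1$ is a quasi-stationary distribution (QSD) for $p^\varepsilon$ if there is $\lambda_\varepsilon\in(0,1)$ with $\int_{M_1}p^\varepsilon(x,\Gamma)\,\mu_\varepsilon(dx)=\lambda_\varepsilon\mu_\varepsilon(\Gamma)$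 for all Borel $\Gamma\subset M_1$. A measure $\mu$ is $F$-invariant if $\mu(F^{-1}\Gamma)=\mu(\Gamma)$ for all Borel $\Gamma$. ap-chain recurrence. For $\delta>0$, an ap $\delta$-pseudoorbit joining $x$ to $y$ is a tuple $(\xi_0,\dots,\xi_n)\in M^{n+1}$, $n\ge1$, with: - $\xi_0=x$ and $\xi_n=y$; - $\xi_i\in M_0\Rightarrow\xi_{i+1}\in M_0$; - $d(\xi_{i+1},F(\xi_i))<\delta$ for all $i$. A point $x$ is ap-chain recurrent if for every $\delta>0$ there is an ap $\delta$-pseudoorbit joining $x$ to itself. $\mathcal{R}_{ap}$ denotes the set of ap-chain recurrent points. *)

theory Defs
  imports "HOL-Probability.Probability"
begin

definition borelM :: "(real^'d) set \<Rightarrow> (real^'d) measure" where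
  "borelM M = restrict_space borel M"

definition nbhd :: "(real^'d) set \<Rightarrow> real \<Rightarrow> (real^'d) set \<Rightarrow> (real^'d) set" where
  "nbhd M \<delta> A = {x \<in> M. \<exists>y\<in>A. norm (x - y) < \<delta>}"

definition dmax :: "real^'d \<Rightarrow> real^'d \<Rightarrow> real" where
  "dmax x y = Max (range (\<lambda>i. \<bar>x $ i - y $ i\<bar>))"

definition ap_pseudoorbit ::
  "(real^'d) set \<Rightarrow> (real^'d) set \<Rightarrow> (real^'d \<Rightarrow> real^'d) \<Rightarrow> real
     \<Rightarrow> real^'d \<Rightarrow> real^'d \<Rightarrow> nat \<Rightarrow> (nat \<Rightarrow> real^'d) \<Rightarrow> bool" where
  "ap_pseudoorbit M M0 F \<delta> x y n \<xi> \<longleftrightarrow>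
     n \<ge> 1 \<and> (\<forall>i\<le>n. \<xi> i \<in> M) \<and> \<xi> 0 = x \<and> \<xi> n = y \<and>
     (\<forall>i<n. \<xi> i \<in> M0 \<longrightarrow> \<xi> (Suc i) \<in> M0) \<and>
     (\<forall>i<n. dmax (\<xi> (Suc i)) (F (\<xi> i)) < \<delta>)"

definition R_ap :: "(real^'d) set \<Rightarrow> (real^'d) set \<Rightarrow> (real^'d \<Rightarrow> real^'d) \<Rightarrow> (real^'d) set" where
  "R_ap M M0 F = {x \<in> M. \<forall>\<delta>>0. \<exists>n \<xi>. ap_pseudoorbit M M0 F \<delta> x x n \<xi>}"

text \<open>mu is a QSD (on M1, as a Borel probability measure on M giving full mass to M1)
  for the kernel K with eigenvalue lam; the kernel value p(x,Gamma) is measure (K x) Gamma.\<close>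
definition is_qsd :: "(real^'d) set \<Rightarrow> (real^'d) set \<Rightarrow> (real^'d \<Rightarrow> (real^'d) measure)
     \<Rightarrow> (real^'d) measure \<Rightarrow> real \<Rightarrow> bool" where
  "is_qsd M M1 K \<mu> lam \<longleftrightarrow>
     prob_space \<mu> \<and> sets \<mu> = sets (borelM M) \<and> measure \<mu> M1 = 1 \<and>
     0 < lam \<and> lam < 1 \<and>
     (\<forall>\<Gamma>\<in>sets (borelM M). \<Gamma> \<subseteq> M1 \<longrightarrow>
        set_lebesgue_integral \<mu> M1 (\<lambda>x. measure (K x) \<Gamma>) = lam * measure \<mu> \<Gamma>)"

definition weak_conv_on :: "(real^'d) set \<Rightarrow> (nat \<Rightarrow> (real^'d) measure) \<Rightarrow> (real^'d) measure \<Rightarrow> bool" where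
  "weak_conv_on M \<mu>s \<mu> \<longleftrightarrow>
     (\<forall>f :: real^'d \<Rightarrow> real. continuous_on M f \<and> bounded (f ` M) \<longrightarrow>
        (\<lambda>n. integral\<^sup>L (\<mu>s n) f) \<longlonglongrightarrow> integral\<^sup>L \<mu> f)"

end

theory Submission
  imports Defs
begin


lemma dmax_le: "dmax x y \<le> norm (x - y)"
  unfolding dmax_def
  by (subst Max_le_iff) (auto simp: component_le_norm_cart simp flip: vector_minus_component)

lemma space_borelM[simp]: "space (borelM M) = M"
  by (simp add: borelM_def space_restrict_space)

lemma funpow_measurable: "F \<in> N \<rightarrow>\<^sub>M N \<Longrightarrow> (F^^n) \<in> N \<rightarrow>\<^sub>M N"
  by (induction n) (auto intro: measurable_comp)

lemma funpow_maps: "F ` M \<subseteq> M \<Longrightarrow> x \<in> M \<Longrightarrow> (F^^n) x \<in> M"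
  by (induction n) auto

lemma inv_funpow:
  assumes Fm: "F \<in> borelM M \<rightarrow>\<^sub>M borelM M" and S: "sets \<mu> = sets (borelM M)"
    and inv: "\<forall>\<Gamma>\<in>sets (borelM M). emeasure \<mu> (F -` \<Gamma> \<inter> M) = emeasure \<mu> \<Gamma>"
    and G: "\<Gamma> \<in> sets (borelM M)"
  shows "emeasure \<mu> ((F^^n) -` \<Gamma> \<inter> M) = emeasure \<mu> \<Gamma>"
proof (induction n)
  case 0
  have "\<Gamma> \<subseteq> M" using sets.sets_into_space[OF G] by simp
  then show ?case by (simp add: Int_absorb2)
next
  case (Suc n)
  have FM: "x \<in> M \<Longrightarrow> F x \<in> M" for x using measurable_space[OF Fm] by simp
  have eq: "(F^^Suc n) -` \<Gamma> \<inter> M = F -` ((F^^n) -` \<Gamma> \<inter> M) \<inter> M"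
    using FM by (auto simp: funpow_Suc_right simp del: funpow.simps)
  have meas: "(F^^n) -` \<Gamma> \<inter> M \<in> sets (borelM M)"
    using measurable_sets[OF funpow_measurable[OF Fm] G, of n] by simp
  have "emeasure \<mu> (F -` ((F^^n) -` \<Gamma> \<inter> M) \<inter> M) = emeasure \<mu> ((F^^n) -` \<Gamma> \<inter> M)"
    using inv meas by blast
  then show ?case by (simp only: eq Suc.IH)
qed

lemma poincare_null:
  assumes P: "prob_space \<mu>" and S: "sets \<mu> = sets (borelM M)"
    and Fm: "F \<in> borelM M \<rightarrow>\<^sub>M borelM M"
    and inv: "\<forall>\<Gamma>\<in>sets (borelM M). emeasure \<mu> (F -` \<Gamma> \<inter> M) = emeasure \<mu> \<Gamma>"
    and A: "A \<in> sets (borelM M)"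
  shows "{x\<in>A. \<forall>n\<ge>1. (F^^n) x \<notin> A} \<in> null_sets \<mu>"
proof -
  interpret prob_space \<mu> by fact
  define N where "N = {x\<in>A. \<forall>n\<ge>1. (F^^n) x \<notin> A}"
  have AM: "A \<subseteq> M" using sets.sets_into_space[OF A] by simp
  have FM: "x \<in> M \<Longrightarrow> (F^^n) x \<in> M" for x n
    using measurable_space[OF funpow_measurable[OF Fm]] by simp
  have Nc: "N = A \<inter> (\<Inter>n. (F^^(Suc n)) -` (M - A) \<inter> M)"
  proof (intro equalityI subsetI)
    fix x assume "x \<in> N"
    then have xA: "x \<in> A" and nr: "\<And>n. n \<ge> 1 \<Longrightarrow> (F^^n) x \<notin> A" unfolding N_def by auto
    have "(F^^(Suc n)) x \<in> M - A" for n using nr[of "Suc n"] FM[of x "Suc n"] xA AM by auto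
    then show "x \<in> A \<inter> (\<Inter>n. (F^^(Suc n)) -` (M - A) \<inter> M)"
      using AM xA by auto
  next
    fix x assume x: "x \<in> A \<inter> (\<Inter>n. (F^^(Suc n)) -` (M - A) \<inter> M)"
    have "(F^^n) x \<notin> A" if "n \<ge> 1" for n
      using x[THEN IntD2, THEN INT_D, of "n - 1"] that by simp
    then show "x \<in> N" using x unfolding N_def by blast
  qed
  have mA: "M - A \<in> sets (borelM M)" using A
    by (metis sets.compl_sets space_borelM)
  have Nm: "N \<in> sets (borelM M)"
  proof -
    have W: "(F^^(Suc n)) -` (M - A) \<inter> M \<in> sets (borelM M)" for n
      using measurable_sets[OF funpow_measurable[OF Fm] mA, of "Suc n"] by (simp only: space_borelM)
    show ?thesis unfolding Nc
      by (intro sets.Int sets.countable_INT' A) (use W in \<open>auto simp del: funpow.simps\<close>)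
  qed
  define W where "W k = (F^^k) -` N \<inter> M" for k
  have Wm: "W k \<in> sets \<mu>" for k
    using measurable_sets[OF funpow_measurable[OF Fm] Nm, of k] S by (simp add: W_def)
  have Weq: "measure \<mu> (W k) = measure \<mu> N" for k
    using inv_funpow[OF Fm S inv Nm, of k] by (simp add: W_def measure_def)
  have disj: "disjoint_family W"
  proof -
    have "W j \<inter> W k = {}" if "j < k" for j k
    proof (rule ccontr)
      assume "W j \<inter> W k \<noteq> {}"
      then obtain x where x: "x \<in> W j" "x \<in> W k" by blast
      define y where "y = (F^^j) x"
      have yN: "y \<in> N" using x by (simp add: W_def y_def)
      have "(F^^k) x = (F^^(k-j)) y"
        using that by (simp add: y_def flip: funpow_add[unfolded comp_def, THEN fun_cong] ) 
      then have "(F^^(k-j)) y \<in> A" using x by (simp add: W_def N_def)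
      moreover have "k - j \<ge> 1" using that by simp
      ultimately show False using yN by (simp add: N_def)
    qed
    then show ?thesis unfolding disjoint_family_on_def
      by (metis Int_commute linorder_neqE_nat)
  qed
  have bound: "real m * measure \<mu> N \<le> 1" for m
  proof -
    have "real m * measure \<mu> N = (\<Sum>k<m. measure \<mu> (W k))" by (simp add: Weq)
    also have "\<dots> = measure \<mu> (\<Union>k<m. W k)"
      using disj Wm by (intro finite_measure_finite_Union[symmetric]) (auto simp: disjoint_family_on_def)
    also have "\<dots> \<le> 1" by simp
    finally show ?thesis .
  qed
  have "measure \<mu> N = 0"
  proof (rule ccontr)
    assume "measure \<mu> N \<noteq> 0"
    then have pos: "measure \<mu> N > 0" by (simp add: zero_less_measure_iff)
    obtain m :: nat where "1 / measure \<mu> N < m" using reals_Archimedean2 by blast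
    then have "1 < real m * measure \<mu> N" using pos by (simp add: field_simps)
    with bound[of m] show False by simp
  qed
  then show ?thesis using Nm S unfolding N_def[symmetric]
    by (simp add: emeasure_eq_measure null_sets_def)
qed




lemma borelM_Int: "X \<in> sets borel \<Longrightarrow> M \<inter> X \<in> sets (borelM M)"
  unfolding borelM_def sets_restrict_space by blast

lemma orbit_pseudo:
  assumes FM: "F ` M \<subseteq> M" and F1: "F ` M1 \<subseteq> M1" and F0: "F ` M0 \<subseteq> M0"
    and part: "M0 \<union> M1 = M" "M0 \<inter> M1 = {}" and x: "x \<in> M" and n: "n \<ge> 1"
    and cl: "norm (x - (F^^n) x) < \<delta>" and d: "\<delta> > 0"
  shows "ap_pseudoorbit M M0 F \<delta> x x n (\<lambda>i. if i < n then (F^^i) x else x)"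
  unfolding ap_pseudoorbit_def
proof (intro conjI allI impI)
  show "1 \<le> n" by fact
  show "(if i < n then (F^^i) x else x) \<in> M" if "i \<le> n" for i
    using funpow_maps[OF FM x] x by auto
  show "(if 0 < n then (F^^0) x else x) = x" by simp
  show "(if n < n then (F^^n) x else x) = x" by simp
next
  fix i assume i: "i < n" and h: "(if i < n then (F^^i) x else x) \<in> M0"
  then have h': "(F^^i) x \<in> M0" by simp
  show "(if Suc i < n then (F^^Suc i) x else x) \<in> M0"
  proof (cases "Suc i < n")
    case True then show ?thesis using h' F0 by auto
  next
    case False
    have "x \<in> M0"
    proof (rule ccontr)
      assume "x \<notin> M0"
      then have "x \<in> M1" using x part by auto
      then have "(F^^i) x \<in> M1" using funpow_maps[OF F1] by blast
      then show False using h' part by auto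
    qed
    then show ?thesis using False by simp
  qed
next
  fix i assume i: "i < n"
  show "dmax (if Suc i < n then (F^^Suc i) x else x) (F (if i < n then (F^^i) x else x)) < \<delta>"
  proof (cases "Suc i < n")
    case True
    then show ?thesis using dmax_le[of "(F^^Suc i) x" "F ((F^^i) x)"] d i by simp
  next
    case False
    then have "n = Suc i" using i by simp
    then show ?thesis using dmax_le[of x "F ((F^^i) x)"] cl i by simp
  qed
qed

lemma support_part:
  assumes P: "prob_space \<mu>" and S: "sets \<mu> = sets (borelM M)"
    and Fm: "F \<in> borelM M \<rightarrow>\<^sub>M borelM M"
    and inv: "\<forall>\<Gamma>\<in>sets (borelM M). emeasure \<mu> (F -` \<Gamma> \<inter> M) = emeasure \<mu> \<Gamma>"
    and F1: "F ` M1 \<subseteq> M1" and F0: "F ` M0 \<subseteq> M0"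
    and part: "M0 \<union> M1 = M" "M0 \<inter> M1 = {}"
  shows "emeasure \<mu> (M - closure (R_ap M M0 F)) = 0"
proof -
  have FM: "F ` M \<subseteq> M" using measurable_space[OF Fm] by auto
  obtain B :: "(real^'a) set set" where B: "countable B" "\<And>C. C \<in> B \<Longrightarrow> open C"
       "\<And>S. open S \<Longrightarrow> \<exists>U. U \<subseteq> B \<and> S = \<Union>U"
    using univ_second_countable by blast
  define N where "N b = {x\<in>M \<inter> b. \<forall>n\<ge>1. (F^^n) x \<notin> M \<inter> b}" for b
  have Nnull: "N b \<in> null_sets \<mu>" if "b \<in> B" for b
    unfolding N_def
    by (rule poincare_null[OF P S Fm inv borelM_Int]) (use B(2)[OF that] in auto)
  define Z where "Z = (\<Union>b\<in>B. N b)"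
  have Z: "Z \<in> null_sets \<mu>" unfolding Z_def using B(1) Nnull by (rule null_sets_UN')
  have sub: "M - closure (R_ap M M0 F) \<subseteq> Z"
  proof
    fix x assume xx: "x \<in> M - closure (R_ap M M0 F)"
    then have x: "x \<in> M" by simp
    have "x \<in> Z"
    proof (rule ccontr)
      assume nZ: "x \<notin> Z"
      have "x \<in> R_ap M M0 F"
        unfolding R_ap_def
      proof (intro CollectI conjI allI impI x)
        fix \<delta> :: real assume d: "\<delta> > 0"
        obtain U where U: "U \<subseteq> B" "ball x \<delta> = \<Union>U" using B(3)[of "ball x \<delta>"] by auto
        obtain b where b: "b \<in> U" "x \<in> b" using U(2) d by (metis UnionE centre_in_ball)
        have bB: "b \<in> B" using b U by auto
        have bs: "b \<subseteq> ball x \<delta>" using U b by auto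
        have "x \<notin> N b" using nZ bB unfolding Z_def by auto
        then obtain n where n: "n \<ge> 1" "(F^^n) x \<in> M \<inter> b" using x b unfolding N_def by auto
        then have "norm (x - (F^^n) x) < \<delta>" using bs by (auto simp: dist_norm)
        then show "\<exists>n \<xi>. ap_pseudoorbit M M0 F \<delta> x x n \<xi>"
          using orbit_pseudo[OF FM F1 F0 part x n(1) _ d] by blast
      qed
      then show False using xx closure_subset by auto
    qed
    then show "x \<in> Z" .
  qed
  have meas: "M - closure (R_ap M M0 F) \<in> sets \<mu>"
    using borelM_Int[of "- closure (R_ap M M0 F)" M] S by (simp add: Diff_eq)
  show ?thesis using null_sets_subset[OF Z meas sub] by (auto simp: null_sets_def)
qed




lemma qsd_step:
  fixes \<mu>n :: "'a measure" and B :: "'a measure"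
  assumes P: "prob_space \<mu>n" and S: "sets \<mu>n = sets B"
    and K: "K \<in> B \<rightarrow>\<^sub>M prob_algebra B" and M1: "M1 \<in> sets B"
    and full: "measure \<mu>n M1 = 1" and lam: "0 \<le> lam"
    and eq: "\<forall>\<Gamma>\<in>sets B. \<Gamma> \<subseteq> M1 \<longrightarrow>
        set_lebesgue_integral \<mu>n M1 (\<lambda>x. measure (K x) \<Gamma>) = lam * measure \<mu>n \<Gamma>"
    and hm: "h \<in> borel_measurable B" and hb: "\<And>x. x \<in> space B \<Longrightarrow> 0 \<le> h x \<and> h x \<le> 1"
  shows "lam * integral\<^sup>L \<mu>n h \<le> integral\<^sup>L \<mu>n (\<lambda>x. integral\<^sup>L (K x) h)"
proof -
  interpret prob_space \<mu>n by fact
  have sp: "space \<mu>n = space B" using S by (rule sets_eq_imp_space_eq)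
  have Kx: "prob_space (K x)" "sets (K x) = sets B" if "x \<in> space B" for x
    using measurable_space[OF K that] by (auto simp: space_prob_algebra)
  have Kxs: "space (K x) = space B" if "x \<in> space B" for x
    using Kx(2)[OF that] by (rule sets_eq_imp_space_eq)
  have KS: "K \<in> B \<rightarrow>\<^sub>M subprob_algebra B" using K by (rule measurable_prob_algebraD)
  have KSm: "K \<in> \<mu>n \<rightarrow>\<^sub>M subprob_algebra B" using KS measurable_cong_sets[OF S refl] by blast
  have mu_sp: "\<mu>n \<in> space (prob_algebra B)" using S P by (simp add: space_prob_algebra)
  define \<nu> where "\<nu> = bind \<mu>n K"
  have nu_sets: "sets \<nu> = sets B" unfolding \<nu>_def by (rule sets_bind'[OF mu_sp K])
  have mM1: "M1 \<in> sets \<mu>n" using M1 S by simp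
  have AE1: "AE x in \<mu>n. x \<in> M1" using full by (intro AE_prob_1) simp
  have hmu: "h \<in> borel_measurable \<mu>n" using hm measurable_cong_sets[OF S refl] by blast
  have setw: "ennreal lam * emeasure \<mu>n G \<le> emeasure \<nu> G" if G: "G \<in> sets B" for G
  proof -
    have GM: "G \<inter> M1 \<in> sets B" using G M1 by blast
    have mk: "(\<lambda>x. measure (K x) (G \<inter> M1)) \<in> borel_measurable \<mu>n"
      using measurable_compose[OF KSm measurable_measure_subprob_algebra[OF GM]] .
    have intg: "integrable \<mu>n (\<lambda>x. indicator M1 x * measure (K x) (G \<inter> M1))"
    proof (rule integrable_const_bound[where B=1])
      show "AE x in \<mu>n. norm (indicator M1 x * measure (K x) (G \<inter> M1)) \<le> (1::real)"
      proof (intro AE_I2)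
        fix x assume "x \<in> space \<mu>n"
        then have "measure (K x) (G \<inter> M1) \<le> 1" using Kx sp by (simp add: prob_space.prob_le_1)
        then show "norm (indicator M1 x * measure (K x) (G \<inter> M1)) \<le> (1::real)"
          by (auto simp: indicator_def)
      qed
      show "(\<lambda>x. indicator M1 x * measure (K x) (G \<inter> M1)) \<in> borel_measurable \<mu>n"
        using mk mM1 by measurable
    qed
    have "emeasure \<nu> G = (\<integral>\<^sup>+x. emeasure (K x) G \<partial>\<mu>n)"
      unfolding \<nu>_def by (rule emeasure_bind_prob_algebra[OF mu_sp K G])
    also have "\<dots> \<ge> (\<integral>\<^sup>+x. ennreal (indicator M1 x * measure (K x) (G \<inter> M1)) \<partial>\<mu>n)"
    proof (rule nn_integral_mono)
      fix x assume x: "x \<in> space \<mu>n"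
      then have xB: "x \<in> space B" using sp by simp
      interpret Kp: prob_space "K x" using Kx(1)[OF xB] .
      have "ennreal (measure (K x) (G \<inter> M1)) = emeasure (K x) (G \<inter> M1)"
        using Kx(2)[OF xB] GM by (simp add: Kp.emeasure_eq_measure)
      also have "\<dots> \<le> emeasure (K x) G" using Kx(2)[OF xB] G by (intro emeasure_mono) auto
      finally show "ennreal (indicator M1 x * measure (K x) (G \<inter> M1)) \<le> emeasure (K x) G"
        by (auto simp: indicator_def)
    qed
    also have "(\<integral>\<^sup>+x. ennreal (indicator M1 x * measure (K x) (G \<inter> M1)) \<partial>\<mu>n)
        = ennreal (\<integral>x. indicator M1 x * measure (K x) (G \<inter> M1) \<partial>\<mu>n)"
      using intg by (intro nn_integral_eq_integral) auto
    also have "(\<integral>x. indicator M1 x * measure (K x) (G \<inter> M1) \<partial>\<mu>n) = lam * measure \<mu>n (G \<inter> M1)"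
      using eq GM by (simp add: set_lebesgue_integral_def)
    also have "measure \<mu>n (G \<inter> M1) = measure \<mu>n G"
      using AE1 GM G S by (intro measure_eq_AE) auto
    finally show ?thesis using lam by (simp add: emeasure_eq_measure ennreal_mult)
  qed
  have le: "scale_measure (ennreal lam) \<mu>n \<le> \<nu>"
    unfolding le_measure_iff
  proof -
    have ss: "space (scale_measure (ennreal lam) \<mu>n) = space \<nu>"
      using nu_sets S by (metis sets_eq_imp_space_eq sets_scale_measure)
    have "emeasure (scale_measure (ennreal lam) \<mu>n) \<le> emeasure \<nu>"
    proof (rule le_funI)
      fix G show "emeasure (scale_measure (ennreal lam) \<mu>n) G \<le> emeasure \<nu> G"
      proof (cases "G \<in> sets B")
        case True then show ?thesis using setw by simp
      next
        case False then show ?thesis using S nu_sets by (simp add: emeasure_notin_sets)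
      qed
    qed
    then show "if space (scale_measure (ennreal lam) \<mu>n) = space \<nu> then
        if sets (scale_measure (ennreal lam) \<mu>n) = sets \<nu> then emeasure (scale_measure (ennreal lam) \<mu>n) \<le> emeasure \<nu>
        else sets (scale_measure (ennreal lam) \<mu>n) \<subseteq> sets \<nu> else space (scale_measure (ennreal lam) \<mu>n) \<subseteq> space \<nu>"
      using ss S nu_sets by simp
  qed
  have "ennreal lam * (\<integral>\<^sup>+x. ennreal (h x) \<partial>\<mu>n) = (\<integral>\<^sup>+x. ennreal (h x) \<partial>scale_measure (ennreal lam) \<mu>n)"
    using hmu by (simp add: nn_integral_scale_measure)
  also have "\<dots> \<le> (\<integral>\<^sup>+x. ennreal (h x) \<partial>\<nu>)"
    using le S nu_sets by (intro nn_integral_mono_measure) auto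
  also have "\<dots> = (\<integral>\<^sup>+x. \<integral>\<^sup>+y. ennreal (h y) \<partial>K x \<partial>\<mu>n)"
    unfolding \<nu>_def using hm KSm by (intro nn_integral_bind[where B=B]) auto
  also have "\<dots> = (\<integral>\<^sup>+x. ennreal (integral\<^sup>L (K x) h) \<partial>\<mu>n)"
  proof (rule nn_integral_cong)
    fix x assume x: "x \<in> space \<mu>n"
    then have xB: "x \<in> space B" using sp by simp
    interpret Kp: prob_space "K x" using Kx(1)[OF xB] .
    have hK: "h \<in> borel_measurable (K x)" using hm measurable_cong_sets[OF Kx(2)[OF xB] refl] by blast
    have "integrable (K x) h"
      using hb Kxs[OF xB] hK by (intro Kp.integrable_const_bound[where B=1]) auto
    then show "(\<integral>\<^sup>+y. ennreal (h y) \<partial>K x) = ennreal (integral\<^sup>L (K x) h)"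
      using hb Kxs[OF xB] by (intro nn_integral_eq_integral) auto
  qed
  also have "\<dots> = ennreal (\<integral>x. integral\<^sup>L (K x) h \<partial>\<mu>n)"
  proof (rule nn_integral_eq_integral)
    have gm: "(\<lambda>x. integral\<^sup>L (K x) h) \<in> borel_measurable \<mu>n"
      using measurable_compose[OF KSm integral_measurable_subprob_algebra[OF hm]] .
    have gb: "0 \<le> integral\<^sup>L (K x) h \<and> integral\<^sup>L (K x) h \<le> 1" if x: "x \<in> space \<mu>n" for x
    proof -
      have xB: "x \<in> space B" using x sp by simp
      interpret Kp: prob_space "K x" using Kx(1)[OF xB] .
      have hK: "h \<in> borel_measurable (K x)" using hm measurable_cong_sets[OF Kx(2)[OF xB] refl] by blast
      have ih: "integrable (K x) h"
        using hb Kxs[OF xB] hK by (intro Kp.integrable_const_bound[where B=1]) auto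
      have "integral\<^sup>L (K x) h \<le> integral\<^sup>L (K x) (\<lambda>_. 1)"
        using ih hb Kxs[OF xB] by (intro integral_mono) auto
      moreover have "0 \<le> integral\<^sup>L (K x) h" using hb Kxs[OF xB] by (intro Bochner_Integration.integral_nonneg) auto
      ultimately show ?thesis by (simp add: Kp.prob_space)
    qed
    show "integrable \<mu>n (\<lambda>x. integral\<^sup>L (K x) h)"
      using gm gb by (intro integrable_const_bound[where B=1]) auto
    show "AE x in \<mu>n. 0 \<le> integral\<^sup>L (K x) h" using gb by auto
  qed
  finally have fin: "ennreal lam * (\<integral>\<^sup>+x. ennreal (h x) \<partial>\<mu>n) \<le> ennreal (\<integral>x. integral\<^sup>L (K x) h \<partial>\<mu>n)" .
  have hint: "integrable \<mu>n h" using hb sp hmu by (intro integrable_const_bound[where B=1]) auto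
  have "(\<integral>\<^sup>+x. ennreal (h x) \<partial>\<mu>n) = ennreal (integral\<^sup>L \<mu>n h)"
    using hint hb sp by (intro nn_integral_eq_integral) auto
  moreover have hnn: "0 \<le> integral\<^sup>L \<mu>n h" using hb sp by (intro Bochner_Integration.integral_nonneg) auto
  ultimately have "ennreal (lam * integral\<^sup>L \<mu>n h) \<le> ennreal (\<integral>x. integral\<^sup>L (K x) h \<partial>\<mu>n)"
    using fin by (simp add: ennreal_mult[OF lam hnn])
  moreover have "0 \<le> lam * integral\<^sup>L \<mu>n h" using lam hb sp by (intro mult_nonneg_nonneg Bochner_Integration.integral_nonneg) auto
  moreover have "0 \<le> (\<integral>x. integral\<^sup>L (K x) h \<partial>\<mu>n)"
  proof (rule Bochner_Integration.integral_nonneg)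
    fix x assume "x \<in> space \<mu>n"
    then have xB: "x \<in> space B" using sp by simp
    show "0 \<le> integral\<^sup>L (K x) h" using hb Kxs[OF xB] by (intro Bochner_Integration.integral_nonneg) auto
  qed
  ultimately show ?thesis by simp
qed




lemma cont_meas_B: "continuous_on UNIV f \<Longrightarrow> (f :: real^'d \<Rightarrow> real) \<in> borel_measurable (borelM M)"
  unfolding borelM_def by (intro measurable_restrict_space1 borel_measurable_continuous_onI)

lemma nbhd_single: "nbhd M \<delta> {y} = M \<inter> ball y \<delta>"
  by (auto simp: nbhd_def dist_norm norm_minus_commute)

lemma kernel_approx:
  fixes Kx :: "(real^'d) measure" and f :: "real^'d \<Rightarrow> real"
  assumes Kx: "prob_space Kx" "sets Kx = sets (borelM M)" and d: "\<delta> > 0" and L: "L \<ge> 0"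
    and fc: "continuous_on UNIV f" and flip: "\<And>a b. \<bar>f a - f b\<bar> \<le> L * dist a b"
    and fb: "\<And>a. 0 \<le> f a \<and> f a \<le> 1"
  shows "\<bar>integral\<^sup>L Kx f - f y\<bar> \<le> L*\<delta> + measure Kx (M - nbhd M \<delta> {y})"
proof -
  interpret prob_space Kx by fact
  have sp: "space Kx = M" using sets_eq_imp_space_eq[OF Kx(2)] by simp
  have fm: "f \<in> borel_measurable Kx"
    using cont_meas_B[OF fc] measurable_cong_sets[OF Kx(2) refl] by blast
  define D where "D = M - nbhd M \<delta> {y}"
  have D: "D = M \<inter> (- ball y \<delta>)" unfolding D_def nbhd_single by auto
  have Dm: "D \<in> sets Kx" unfolding D using borelM_Int[of "- ball y \<delta>" M] Kx(2) by simp
  have fi: "integrable Kx f" using fb fm by (intro integrable_const_bound[where B=1]) auto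
  have "integral\<^sup>L Kx f - f y = integral\<^sup>L Kx (\<lambda>z. f z - f y)"
    using fi by (simp add: prob_space)
  also have "\<bar>\<dots>\<bar> \<le> integral\<^sup>L Kx (\<lambda>z. L*\<delta> + indicator D z)"
  proof (rule integral_abs_bound_integral)
    show "integrable Kx (\<lambda>z. f z - f y)" using fi by simp
    show "integrable Kx (\<lambda>z. L*\<delta> + indicator D z)"
      by (intro integrable_const_bound[where B="L*\<delta>+1"] borel_measurable_add borel_measurable_const borel_measurable_indicator[OF Dm])
         (use L d in \<open>auto simp: indicator_def\<close>)
    fix z assume z: "z \<in> space Kx"
    show "\<bar>f z - f y\<bar> \<le> L*\<delta> + indicator D z"
    proof (cases "z \<in> D")
      case True then show ?thesis using fb[of z] fb[of y] mult_nonneg_nonneg[OF L less_imp_le[OF d]] by (auto simp: indicator_def)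
    next
      case False
      then have "dist y z < \<delta>" using z sp unfolding D by auto
      then have "L * dist z y \<le> L * \<delta>" using L by (intro mult_left_mono) (auto simp: dist_commute)
      then show ?thesis using flip[of z y] False by (auto simp: indicator_def)
    qed
  qed
  also have "\<dots> = integral\<^sup>L Kx (\<lambda>z. L*\<delta>) + integral\<^sup>L Kx (indicator D)"
  proof (rule Bochner_Integration.integral_add)
    show "integrable Kx (indicator D :: _ \<Rightarrow> real)"
      by (intro integrable_const_bound[where B=1] borel_measurable_indicator[OF Dm]) auto
  qed simp
  also have "\<dots> = L*\<delta> + measure Kx D"
    using Dm by (simp add: prob_space sets.Int_space_eq2)
  finally show ?thesis unfolding D_def .
qed




lemma n_est:
  fixes \<mu>n :: "(real^'d) measure" and Ke :: "real^'d \<Rightarrow> (real^'d) measure" and f :: "real^'d \<Rightarrow> real"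
  assumes P: "prob_space \<mu>n" and S: "sets \<mu>n = sets (borelM M)"
    and K: "Ke \<in> borelM M \<rightarrow>\<^sub>M prob_algebra (borelM M)" and M1: "M1 \<in> sets (borelM M)"
    and full: "measure \<mu>n M1 = 1" and lam: "0 \<le> lam" "lam \<le> 1"
    and eq: "\<forall>\<Gamma>\<in>sets (borelM M). \<Gamma> \<subseteq> M1 \<longrightarrow>
        set_lebesgue_integral \<mu>n M1 (\<lambda>x. measure (Ke x) \<Gamma>) = lam * measure \<mu>n \<Gamma>"
    and Fc: "continuous_on M F" and FM: "F ` M \<subseteq> M"
    and d: "\<delta> > 0" and L: "L \<ge> 0"
    and fc: "continuous_on UNIV f" and flip: "\<And>a b. \<bar>f a - f b\<bar> \<le> L * dist a b"
    and fb: "\<And>a. 0 \<le> f a \<and> f a \<le> 1"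
    and sb: "\<And>x. x \<in> M \<Longrightarrow> measure (Ke x) (M - nbhd M \<delta> {F x}) \<le> s"
  shows "\<bar>integral\<^sup>L \<mu>n f - integral\<^sup>L \<mu>n (\<lambda>x. f (F x))\<bar> \<le> (1 - lam) + (L*\<delta> + s)"
proof -
  interpret prob_space \<mu>n by fact
  have sp: "space \<mu>n = M" using sets_eq_imp_space_eq[OF S] by simp
  have fB: "f \<in> borel_measurable (borelM M)" using fc by (rule cont_meas_B)
  have fFB: "(\<lambda>x. f (F x)) \<in> borel_measurable (borelM M)"
    unfolding borelM_def
    by (rule borel_measurable_continuous_on_restrict[OF continuous_on_compose2[OF fc Fc]]) simp
  have Kx: "prob_space (Ke x)" "sets (Ke x) = sets (borelM M)" if "x \<in> M" for x
    using measurable_space[OF K, of x] that by (auto simp: space_prob_algebra)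
  have Kxs: "space (Ke x) = M" if "x \<in> M" for x
    using sets_eq_imp_space_eq[OF Kx(2)[OF that]] by simp
  define g where "g x = integral\<^sup>L (Ke x) f" for x
  have gB: "g \<in> borel_measurable (borelM M)"
    unfolding g_def
    using measurable_compose[OF measurable_prob_algebraD[OF K] integral_measurable_subprob_algebra[OF fB]] .
  have fKi: "integrable (Ke x) f" if x: "x \<in> M" for x
  proof -
    interpret Kp: prob_space "Ke x" using Kx(1)[OF x] .
    show ?thesis using fb fB measurable_cong_sets[OF Kx(2)[OF x] refl]
      by (intro Kp.integrable_const_bound[where B=1]) auto
  qed
  have gb: "0 \<le> g x \<and> g x \<le> 1" if x: "x \<in> M" for x
  proof -
    interpret Kp: prob_space "Ke x" using Kx(1)[OF x] .
    have "integral\<^sup>L (Ke x) f \<le> integral\<^sup>L (Ke x) (\<lambda>_. 1)"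
      using fKi[OF x] fb by (intro integral_mono) auto
    moreover have "0 \<le> integral\<^sup>L (Ke x) f" using fb by (intro Bochner_Integration.integral_nonneg) auto
    ultimately show ?thesis by (simp add: Kp.prob_space g_def)
  qed
  have fmu: "f \<in> borel_measurable \<mu>n" using fB measurable_cong_sets[OF S refl] by blast
  have fFmu: "(\<lambda>x. f (F x)) \<in> borel_measurable \<mu>n" using fFB measurable_cong_sets[OF S refl] by blast
  have gmu: "g \<in> borel_measurable \<mu>n" using gB measurable_cong_sets[OF S refl] by blast
  have fi: "integrable \<mu>n f" using fb fmu by (intro integrable_const_bound[where B=1]) auto
  have fFi: "integrable \<mu>n (\<lambda>x. f (F x))" using fb fFmu by (intro integrable_const_bound[where B=1]) auto
  have gi: "integrable \<mu>n g" using gb gmu sp by (intro integrable_const_bound[where B=1]) auto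
  define a where "a = integral\<^sup>L \<mu>n f"
  define b where "b = integral\<^sup>L \<mu>n (\<lambda>x. f (F x))"
  define c where "c = integral\<^sup>L \<mu>n g"
  have q1: "lam * a \<le> c"
    unfolding a_def c_def g_def
    by (rule qsd_step[OF P S K M1 full lam(1) eq fB]) (use fb in auto)
  have q2: "lam * integral\<^sup>L \<mu>n (\<lambda>x. 1 - f x) \<le> integral\<^sup>L \<mu>n (\<lambda>x. integral\<^sup>L (Ke x) (\<lambda>y. 1 - f y))"
    by (rule qsd_step[OF P S K M1 full lam(1) eq]) (use fb fB in auto)
  have i1: "integral\<^sup>L \<mu>n (\<lambda>x. 1 - f x) = 1 - a"
    unfolding a_def using fi by (simp add: prob_space)
  have "integral\<^sup>L \<mu>n (\<lambda>x. integral\<^sup>L (Ke x) (\<lambda>y. 1 - f y)) = integral\<^sup>L \<mu>n (\<lambda>x. 1 - g x)"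
  proof (rule Bochner_Integration.integral_cong)
    fix x assume "x \<in> space \<mu>n"
    then have x: "x \<in> M" using sp by simp
    interpret Kp: prob_space "Ke x" using Kx(1)[OF x] .
    show "integral\<^sup>L (Ke x) (\<lambda>y. 1 - f y) = 1 - g x"
      using fKi[OF x] by (simp add: g_def Kp.prob_space)
  qed simp
  also have "\<dots> = 1 - c" unfolding c_def using gi by (simp add: prob_space)
  finally have i2: "integral\<^sup>L \<mu>n (\<lambda>x. integral\<^sup>L (Ke x) (\<lambda>y. 1 - f y)) = 1 - c" .
  have ab: "0 \<le> a" "a \<le> 1"
  proof -
    show "0 \<le> a" unfolding a_def using fb by (intro Bochner_Integration.integral_nonneg) auto
    have "a \<le> integral\<^sup>L \<mu>n (\<lambda>_. 1)" unfolding a_def using fi fb by (intro integral_mono) auto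
    then show "a \<le> 1" by (simp add: prob_space)
  qed
  have h1: "lam * a \<le> a" using ab lam by (simp add: mult_left_le_one_le)
  have h2: "a - (1 - lam) \<le> lam * a"
    using mult_nonneg_nonneg[of "1-lam" "1-a"] ab lam by (simp add: algebra_simps)
  have ca: "\<bar>c - a\<bar> \<le> 1 - lam" using q1 q2 i1 i2 h1 h2 by (simp add: algebra_simps)
  have "c - b = integral\<^sup>L \<mu>n (\<lambda>x. g x - f (F x))"
    unfolding c_def b_def using gi fFi by simp
  also have "\<bar>\<dots>\<bar> \<le> integral\<^sup>L \<mu>n (\<lambda>x. L*\<delta> + s)"
  proof (rule integral_abs_bound_integral)
    show "integrable \<mu>n (\<lambda>x. g x - f (F x))" using gi fFi by simp
    show "integrable \<mu>n (\<lambda>x. L*\<delta> + s)" by simp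
    fix x assume "x \<in> space \<mu>n"
    then have x: "x \<in> M" using sp by simp
    have "\<bar>g x - f (F x)\<bar> \<le> L*\<delta> + measure (Ke x) (M - nbhd M \<delta> {F x})"
      unfolding g_def by (rule kernel_approx[OF Kx[OF x] d L fc flip fb])
    then show "\<bar>g x - f (F x)\<bar> \<le> L*\<delta> + s" using sb[OF x] by simp
  qed
  also have "\<dots> = L*\<delta> + s" by (simp add: prob_space)
  finally have cb: "\<bar>c - b\<bar> \<le> L*\<delta> + s" .
  show ?thesis using ca cb unfolding a_def[symmetric] b_def[symmetric] by linarith
qed




lemma lip_invariant:
  fixes M M0 M1 :: "(real^'d) set"
    and F :: "real^'d \<Rightarrow> real^'d"
    and K :: "real \<Rightarrow> real^'d \<Rightarrow> (real^'d) measure"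
    and \<epsilon> :: "nat \<Rightarrow> real"
    and \<mu>s :: "nat \<Rightarrow> (real^'d) measure"
    and lam :: "nat \<Rightarrow> real"
    and \<mu> :: "(real^'d) measure" and f :: "real^'d \<Rightarrow> real"
  assumes F_cont: "continuous_on M F"
    and F_maps: "F ` M \<subseteq> M"
    and kernel: "\<And>e. e > 0 \<Longrightarrow> K e \<in> borelM M \<rightarrow>\<^sub>M prob_algebra (borelM M)"
    and SH1: "\<And>\<delta>. \<delta> > 0 \<Longrightarrow>
      ((\<lambda>e. SUP x\<in>M. measure (K e x) (M - nbhd M \<delta> {F x})) \<longlongrightarrow> 0) (at_right 0)"
    and M1m: "M1 \<in> sets (borelM M)"
    and eps_pos: "\<And>n. \<epsilon> n > 0"
    and eps_lim: "\<epsilon> \<longlonglongrightarrow> 0"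
    and qsd: "\<And>n. is_qsd M M1 (K (\<epsilon> n)) (\<mu>s n) (lam n)"
    and weak: "weak_conv_on M \<mu>s \<mu>"
    and lam_lim: "lam \<longlonglongrightarrow> 1"
    and L: "L \<ge> 0"
    and fc: "continuous_on UNIV f" and flip: "\<And>a b. \<bar>f a - f b\<bar> \<le> L * dist a b"
    and fb: "\<And>a. 0 \<le> f a \<and> f a \<le> 1"
  shows "integral\<^sup>L \<mu> (\<lambda>x. f (F x)) = integral\<^sup>L \<mu> f"
proof -
  define A where "A = integral\<^sup>L \<mu> f"
  define B where "B = integral\<^sup>L \<mu> (\<lambda>x. f (F x))"
  have bd1: "bounded (f ` M)"
    unfolding bounded_real using fb by (intro exI[of _ 1]) (auto simp: abs_le_iff intro: order_trans[of "-1" 0])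
  have bd2: "bounded ((\<lambda>x. f (F x)) ` M)"
    unfolding bounded_real using fb by (intro exI[of _ 1]) (auto simp: abs_le_iff intro: order_trans[of "-1" 0])
  have c1: "continuous_on M f" using fc by (rule continuous_on_subset) simp
  have c2: "continuous_on M (\<lambda>x. f (F x))" by (rule continuous_on_compose2[OF fc F_cont]) simp
  have la: "(\<lambda>n. integral\<^sup>L (\<mu>s n) f) \<longlonglongrightarrow> A"
    using weak c1 bd1 unfolding weak_conv_on_def A_def by blast
  have lb: "(\<lambda>n. integral\<^sup>L (\<mu>s n) (\<lambda>x. f (F x))) \<longlonglongrightarrow> B"
    using weak c2 bd2 unfolding weak_conv_on_def B_def by blast
  have key: "\<bar>A - B\<bar> \<le> L * \<delta>" if d: "\<delta> > 0" for \<delta>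
  proof -
    define S where "S e = (SUP x\<in>M. measure (K e x) (M - nbhd M \<delta> {F x}))" for e
    have filt: "filterlim \<epsilon> (at_right 0) sequentially"
      using eps_lim eps_pos by (intro tendsto_imp_filterlim_at_right) auto
    have lS: "(\<lambda>n. S (\<epsilon> n)) \<longlonglongrightarrow> 0"
      using filterlim_compose[OF SH1[OF d] filt] unfolding S_def .
    have est: "\<bar>integral\<^sup>L (\<mu>s n) f - integral\<^sup>L (\<mu>s n) (\<lambda>x. f (F x))\<bar> \<le> (1 - lam n) + (L*\<delta> + S (\<epsilon> n))" for n
    proof -
      have q: "prob_space (\<mu>s n)" "sets (\<mu>s n) = sets (borelM M)" "measure (\<mu>s n) M1 = 1"
        "0 < lam n" "lam n < 1"
        "\<forall>\<Gamma>\<in>sets (borelM M). \<Gamma> \<subseteq> M1 \<longrightarrow>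
          set_lebesgue_integral (\<mu>s n) M1 (\<lambda>x. measure (K (\<epsilon> n) x) \<Gamma>) = lam n * measure (\<mu>s n) \<Gamma>"
        using qsd[of n] unfolding is_qsd_def by auto
      have Kn: "K (\<epsilon> n) \<in> borelM M \<rightarrow>\<^sub>M prob_algebra (borelM M)" using kernel eps_pos by blast
      have sb: "measure (K (\<epsilon> n) x) (M - nbhd M \<delta> {F x}) \<le> S (\<epsilon> n)" if x: "x \<in> M" for x
        unfolding S_def
      proof (rule cSUP_upper[OF x])
        show "bdd_above ((\<lambda>x. measure (K (\<epsilon> n) x) (M - nbhd M \<delta> {F x})) ` M)"
        proof (rule bdd_aboveI[where M=1])
          fix y assume "y \<in> (\<lambda>x. measure (K (\<epsilon> n) x) (M - nbhd M \<delta> {F x})) ` M"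
          then obtain z where z: "z \<in> M" "y = measure (K (\<epsilon> n) z) (M - nbhd M \<delta> {F z})" by auto
          have "prob_space (K (\<epsilon> n) z)" using measurable_space[OF Kn, of z] z by (auto simp: space_prob_algebra)
          then show "y \<le> 1" using z by (simp add: prob_space.prob_le_1)
        qed
      qed
      show ?thesis
        by (rule n_est[OF q(1,2) Kn M1m q(3) _ _ q(6) F_cont F_maps d L fc flip fb sb]) (use q in auto)
    qed
    have lim1: "(\<lambda>n. \<bar>integral\<^sup>L (\<mu>s n) f - integral\<^sup>L (\<mu>s n) (\<lambda>x. f (F x))\<bar>) \<longlonglongrightarrow> \<bar>A - B\<bar>"
      by (intro tendsto_intros la lb)
    have lim2: "(\<lambda>n. (1 - lam n) + (L*\<delta> + S (\<epsilon> n))) \<longlonglongrightarrow> (1 - 1) + (L*\<delta> + 0)"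
      by (intro tendsto_intros lam_lim lS)
    show ?thesis using tendsto_le[OF _ lim2 lim1] est by simp
  qed
  have "A = B"
  proof (rule ccontr)
    assume "A \<noteq> B"
    then have pos: "\<bar>A - B\<bar> > 0" by simp
    define \<delta> where "\<delta> = \<bar>A - B\<bar> / (2 * (L + 1))"
    have d: "\<delta> > 0" unfolding \<delta>_def using pos L by simp
    have "L * \<delta> \<le> (L + 1) * \<delta>" using d by (simp add: algebra_simps)
    also have "\<dots> = \<bar>A - B\<bar> / 2" unfolding \<delta>_def using L by (simp add: field_simps)
    finally show False using key[OF d] pos by simp
  qed
  then show ?thesis unfolding A_def B_def by simp
qed




definition approx :: "(real^'d) set \<Rightarrow> nat \<Rightarrow> real^'d \<Rightarrow> real" where
  "approx C k x = max 0 (1 - real (Suc k) * infdist x C)"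

lemma approx_cont: "continuous_on UNIV (approx C k)"
  unfolding approx_def by (intro continuous_intros)

lemma approx_bounds: "0 \<le> approx C k x \<and> approx C k x \<le> 1"
  unfolding approx_def using infdist_nonneg[of x C] by auto

lemma approx_lip: "\<bar>approx C k a - approx C k b\<bar> \<le> real (Suc k) * dist a b"
proof -
  have "\<bar>approx C k a - approx C k b\<bar> \<le> \<bar>real (Suc k) * infdist a C - real (Suc k) * infdist b C\<bar>"
    unfolding approx_def by (auto simp: max_def)
  also have "\<dots> = real (Suc k) * \<bar>infdist a C - infdist b C\<bar>"
    by (simp add: abs_mult flip: right_diff_distrib)
  also have "\<dots> \<le> real (Suc k) * dist a b"
    by (intro mult_left_mono infdist_triangle_abs) auto
  finally show ?thesis .
qed

lemma approx_lim:
  assumes C: "closed C" "C \<noteq> {}"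
  shows "(\<lambda>k. approx C k x) \<longlonglongrightarrow> indicator C x"
proof (cases "x \<in> C")
  case True
  then show ?thesis by (simp add: approx_def)
next
  case False
  have d: "infdist x C > 0" using infdist_pos_not_in_closed[OF C False] .
  obtain K :: nat where K: "1 / infdist x C < K" using reals_Archimedean2 by blast
  have "eventually (\<lambda>k. approx C k x = 0) sequentially"
    unfolding eventually_sequentially
  proof (intro exI allI impI)
    fix k assume "K \<le> k"
    then have "1 / infdist x C < real (Suc k)" using K by linarith
    then have "1 < real (Suc k) * infdist x C" using d by (simp add: field_simps)
    then show "approx C k x = 0" by (simp add: approx_def)
  qed
  then show ?thesis using False by (simp add: tendsto_eventually)
qed

lemma approx_conv:
  assumes P: "prob_space \<mu>" and sp: "space \<mu> = M"
    and C: "closed C" "C \<noteq> {}" and phi: "\<phi> \<in> borel_measurable \<mu>"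
  shows "(\<lambda>k. integral\<^sup>L \<mu> (\<lambda>x. approx C k (\<phi> x))) \<longlonglongrightarrow> measure \<mu> (\<phi> -` C \<inter> M)"
proof -
  interpret prob_space \<mu> by fact
  have Cb: "C \<in> sets borel" using C by simp
  have ind: "(\<lambda>x. indicator C (\<phi> x) :: real) = indicator (\<phi> -` C)"
    by (auto simp: indicator_def)
  have "(\<lambda>k. integral\<^sup>L \<mu> (\<lambda>x. approx C k (\<phi> x))) \<longlonglongrightarrow> integral\<^sup>L \<mu> (\<lambda>x. indicator C (\<phi> x))"
  proof (rule integral_dominated_convergence[where w="\<lambda>_. 1"])
    show "(\<lambda>x. indicator C (\<phi> x) :: real) \<in> borel_measurable \<mu>"
      using measurable_compose[OF phi borel_measurable_indicator[OF Cb]] .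
    show "(\<lambda>x. approx C k (\<phi> x)) \<in> borel_measurable \<mu>" for k
      using measurable_compose[OF phi borel_measurable_continuous_onI[OF approx_cont]] .
    show "integrable \<mu> (\<lambda>_. 1::real)" by simp
    show "AE x in \<mu>. (\<lambda>k. approx C k (\<phi> x)) \<longlonglongrightarrow> indicator C (\<phi> x)"
      using approx_lim[OF C] by simp
    show "AE x in \<mu>. norm (approx C k (\<phi> x)) \<le> 1" for k
      by (intro AE_I2) (metis abs_of_nonneg approx_bounds real_norm_def)
  qed
  also have "integral\<^sup>L \<mu> (\<lambda>x. indicator C (\<phi> x)) = measure \<mu> (\<phi> -` C \<inter> M)"
    unfolding ind by (simp add: sp)
  finally show ?thesis .
qed

lemma closed_eq:
  assumes P: "prob_space \<mu>" and sp: "space \<mu> = M" and S: "sets \<mu> = sets (borelM M)"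
    and Fmeas: "F \<in> borel_measurable \<mu>"
    and int: "\<And>f L. L \<ge> 0 \<Longrightarrow> continuous_on UNIV f \<Longrightarrow> (\<And>a b. \<bar>f a - f b\<bar> \<le> L * dist a b)
       \<Longrightarrow> (\<And>a. 0 \<le> f a \<and> f a \<le> 1) \<Longrightarrow> integral\<^sup>L \<mu> (\<lambda>x. f (F x)) = integral\<^sup>L \<mu> f"
    and C: "closed (C :: (real^'d) set)"
  shows "measure \<mu> (F -` C \<inter> M) = measure \<mu> (C \<inter> M)"
proof (cases "C = {}")
  case True then show ?thesis by simp
next
  case False
  have "(\<lambda>x. x) \<in> borel_measurable (borelM M)"
    unfolding borelM_def by (rule measurable_restrict_space1) simp
  then have idm: "(\<lambda>x. x) \<in> borel_measurable \<mu>"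
    using measurable_cong_sets[OF S refl] by blast
  have l1: "(\<lambda>k. integral\<^sup>L \<mu> (\<lambda>x. approx C k (F x))) \<longlonglongrightarrow> measure \<mu> (F -` C \<inter> M)"
    by (rule approx_conv[OF P sp C False Fmeas])
  have l2: "(\<lambda>k. integral\<^sup>L \<mu> (\<lambda>x. approx C k x)) \<longlonglongrightarrow> measure \<mu> ((\<lambda>x. x) -` C \<inter> M)"
    by (rule approx_conv[OF P sp C False idm])
  have eqk: "integral\<^sup>L \<mu> (\<lambda>x. approx C k (F x)) = integral\<^sup>L \<mu> (\<lambda>x. approx C k x)" for k
  proof -
    have "integral\<^sup>L \<mu> (\<lambda>x. approx C k (F x)) = integral\<^sup>L \<mu> (approx C k)"
      by (rule int[of "real (Suc k)" "approx C k"]) (simp, rule approx_cont, rule approx_lip, rule approx_bounds)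
    then show ?thesis by (simp add: eta_contract_eq)
  qed
  from l1 have "(\<lambda>k. integral\<^sup>L \<mu> (\<lambda>x. approx C k x)) \<longlonglongrightarrow> measure \<mu> (F -` C \<inter> M)"
    by (simp add: eqk)
  with l2 show ?thesis using LIMSEQ_unique by fastforce
qed




lemma eq_from_closed:
  assumes P: "prob_space \<mu>" and S: "sets \<mu> = sets (borelM M)"
    and Fm: "F \<in> borelM M \<rightarrow>\<^sub>M borelM M"
    and cl: "\<And>C. closed (C :: (real^'d) set) \<Longrightarrow> measure \<mu> (F -` C \<inter> M) = measure \<mu> (C \<inter> M)"
  shows "\<forall>\<Gamma>\<in>sets (borelM M). emeasure \<mu> (F -` \<Gamma> \<inter> M) = emeasure \<mu> \<Gamma>"
proof -
  interpret prob_space \<mu> by fact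
  have sp: "space \<mu> = M" using sets_eq_imp_space_eq[OF S] by simp
  have FM: "x \<in> M \<Longrightarrow> F x \<in> M" for x using measurable_space[OF Fm] by simp
  have "F \<in> borelM M \<rightarrow>\<^sub>M borel" using Fm unfolding borelM_def measurable_restrict_space2_iff by simp
  then have FMB: "F \<in> \<mu> \<rightarrow>\<^sub>M borel" using measurable_cong_sets[OF S refl] by blast
  have "(\<lambda>x. x) \<in> borel_measurable (borelM M)"
    unfolding borelM_def by (rule measurable_restrict_space1) simp
  then have idB: "(\<lambda>x. x) \<in> \<mu> \<rightarrow>\<^sub>M borel"
    using measurable_cong_sets[OF S refl] by blast
  define \<mu>' where "\<mu>' = distr \<mu> borel (\<lambda>x. x)"
  define \<nu>' where "\<nu>' = distr \<mu> borel F"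
  have e1: "emeasure \<mu>' X = emeasure \<mu> (X \<inter> M)" if "X \<in> sets borel" for X
    unfolding \<mu>'_def using emeasure_distr[OF idB that] sp by simp
  have e2: "emeasure \<nu>' X = emeasure \<mu> (F -` X \<inter> M)" if "X \<in> sets borel" for X
    unfolding \<nu>'_def using emeasure_distr[OF FMB that] sp by simp
  have eqm: "\<mu>' = \<nu>'"
  proof (rule measure_eqI_generator_eq[where \<Omega>=UNIV and E="Collect closed" and A="\<lambda>_. UNIV"])
    show "Int_stable (Collect closed)" by (auto simp: Int_stable_def)
    show "Collect closed \<subseteq> Pow UNIV" by simp
    show "emeasure \<mu>' X = emeasure \<nu>' X" if "X \<in> Collect closed" for X
    proof -
      have X: "closed X" "X \<in> sets borel" using that by auto
      have m1: "X \<inter> M \<in> sets \<mu>" using borelM_Int[OF X(2), of M] S by (simp add: Int_commute)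
      have m2: "F -` X \<inter> M \<in> sets \<mu>" using measurable_sets[OF FMB X(2)] sp by simp
      show ?thesis using e1[OF X(2)] e2[OF X(2)] cl[OF X(1)] m1 m2
        by (simp add: emeasure_eq_measure)
    qed
    show "sets \<mu>' = sigma_sets UNIV (Collect closed)"
      unfolding \<mu>'_def by (simp add: borel_eq_closed)
    show "sets \<nu>' = sigma_sets UNIV (Collect closed)"
      unfolding \<nu>'_def by (simp add: borel_eq_closed)
    show "range (\<lambda>_. UNIV) \<subseteq> Collect closed" by auto
    show "(\<Union>i::nat. UNIV) = (UNIV :: (real^'d) set)" by simp
    show "emeasure \<mu>' UNIV \<noteq> \<infinity>" for i :: nat using e1[of UNIV] by (simp add: emeasure_eq_measure)
  qed
  show ?thesis
  proof
    fix G assume G: "G \<in> sets (borelM M)"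
    then obtain A where A: "A \<in> sets borel" "G = M \<inter> A"
      unfolding borelM_def sets_restrict_space by auto
    have "F -` G \<inter> M = F -` A \<inter> M" using A(2) FM by auto
    then have "emeasure \<mu> (F -` G \<inter> M) = emeasure \<nu>' A" using e2[OF A(1)] by simp
    also have "\<dots> = emeasure \<mu>' A" using eqm by simp
    also have "\<dots> = emeasure \<mu> G" using e1[OF A(1)] A(2) by (simp add: Int_commute)
    finally show "emeasure \<mu> (F -` G \<inter> M) = emeasure \<mu> G" .
  qed
qed




theorem mainTheorem8:
  fixes M M0 M1 :: "(real^'d) set"
    and F :: "real^'d \<Rightarrow> real^'d"
    and K :: "real \<Rightarrow> real^'d \<Rightarrow> (real^'d) measure"
    and \<epsilon> :: "nat \<Rightarrow> real"
    and \<mu>s :: "nat \<Rightarrow> (real^'d) measure"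
    and lam :: "nat \<Rightarrow> real"
    and \<mu> :: "(real^'d) measure"
  assumes M_closed: "closed M"
    and F_cont: "continuous_on M F"
    and F_maps: "F ` M \<subseteq> M"
    and F_bdd: "bounded (F ` M)"
    and kernel: "\<And>e. e > 0 \<Longrightarrow> K e \<in> borelM M \<rightarrow>\<^sub>M prob_algebra (borelM M)"
    and SH1: "\<And>\<delta>. \<delta> > 0 \<Longrightarrow>
      ((\<lambda>e. SUP x\<in>M. measure (K e x) (M - nbhd M \<delta> {F x})) \<longlongrightarrow> 0) (at_right 0)"
    and SH2_part: "M0 \<union> M1 = M" "M0 \<inter> M1 = {}"
    and SH2_closed: "closed M0"
    and SH2_inv0: "F ` M0 \<subseteq> M0"
    and SH2_inv1: "F ` M1 \<subseteq> M1"
    and SH2_abs: "\<And>e x. e > 0 \<Longrightarrow> x \<in> M0 \<Longrightarrow> measure (K e x) M1 = 0"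
    and eps_pos: "\<And>n. \<epsilon> n > 0"
    and eps_dec: "decseq \<epsilon>"
    and eps_lim: "\<epsilon> \<longlonglongrightarrow> 0"
    and qsd: "\<And>n. is_qsd M M1 (K (\<epsilon> n)) (\<mu>s n) (lam n)"
    and mu_prob: "prob_space \<mu>" "sets \<mu> = sets (borelM M)"
    and weak: "weak_conv_on M \<mu>s \<mu>"
    and lam_lim: "lam \<longlonglongrightarrow> 1"
  shows "(\<forall>\<Gamma>\<in>sets (borelM M). emeasure \<mu> (F -` \<Gamma> \<inter> M) = emeasure \<mu> \<Gamma>)
       \<and> emeasure \<mu> (M - closure (R_ap M M0 F)) = 0"
proof -
  have M1eq: "M1 = M \<inter> (- M0)" using SH2_part by auto
  have M1m: "M1 \<in> sets (borelM M)"
    unfolding M1eq using SH2_closed by (intro borelM_Int) (simp add: open_Compl)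
  have Fm: "F \<in> borelM M \<rightarrow>\<^sub>M borelM M"
    unfolding borelM_def
    by (rule measurable_restrict_space2) (use F_maps borel_measurable_continuous_on_restrict[OF F_cont] in \<open>auto simp: space_restrict_space\<close>)
  have sp: "space \<mu> = M" using sets_eq_imp_space_eq[OF mu_prob(2)] by simp
  have Fmu: "F \<in> borel_measurable \<mu>"
    using Fm measurable_cong_sets[OF mu_prob(2) refl] unfolding borelM_def measurable_restrict_space2_iff
    by blast
  have int: "integral\<^sup>L \<mu> (\<lambda>x. f (F x)) = integral\<^sup>L \<mu> f"
    if "L \<ge> 0" "continuous_on UNIV f" "\<And>a b. \<bar>f a - f b\<bar> \<le> L * dist a b" "\<And>a. 0 \<le> f a \<and> f a \<le> 1"
    for f :: "real^'d \<Rightarrow> real" and L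
    by (rule lip_invariant[OF F_cont F_maps kernel SH1 M1m eps_pos eps_lim qsd weak lam_lim that])
  have cl: "measure \<mu> (F -` C \<inter> M) = measure \<mu> (C \<inter> M)" if "closed C" for C :: "(real^'d) set"
    by (rule closed_eq[OF mu_prob(1) sp mu_prob(2) Fmu int that]) auto
  have inv: "\<forall>\<Gamma>\<in>sets (borelM M). emeasure \<mu> (F -` \<Gamma> \<inter> M) = emeasure \<mu> \<Gamma>"
    by (rule eq_from_closed[OF mu_prob Fm cl])
  have "emeasure \<mu> (M - closure (R_ap M M0 F)) = 0"
    by (rule support_part[OF mu_prob Fm inv SH2_inv1 SH2_inv0 SH2_part])
  with inv show ?thesis by blast
qed


end
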